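(* (1) Let $(Y_0,Y_1)$ be an arbitrary pair of real random variables and let $Y$ and $D\in\{0,1\}$ satisfy $Y=Y_1D+Y_0(1-D)$ and almost surely $Y_1>Y_0\Rightarrow D=1$, $Y_1<Y_0\Rightarrow D=0$. Then the distribution functions $F_0,F_1$ of $Y_0,Y_1$ satisfy $$F_d(y_2)-F_d(y_1)\ge \mathbb P(y_1<Y\le y_2,D=d)+\mathbb P(Y\le y_2,D=1-d)\,1\{y_1=-\infty\}\qquad(\ast)$$ for $d=0,1$ and all $y_1,y_2\in\mathbb R\cup\{\pm\infty\}$ with $y_1<y_2$. (2) Conversely, let $Y$ be an arbitrary real random variable and $D$ a binary random variable, and let $F_0,F_1$ be right-continuous functions satisfying $(\ast)$ for $d=0,1$ and all $y_1<y_2$ in $\mathbb R\cup\{\pm\infty\}$. Then there exist, on some probability space, random variables $(\tilde Y,\tilde D,Y_0,Y_1)$ with $(\tilde Y,\tilde D)$ distributed as $(Y,D)$, $Y_0$ and $Y_1$ having distribution functions $F_0$ and $F_1$ respectively, $\tilde Y=Y_1\tilde D+Y_0(1-\tilde D)$, and almost surely $Y_1>Y_0\Rightarrow\tilde D=1$, $Y_1<Y_0\Rightarrow\tilde D=0$.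
   Context: For a function $F$ on $\mathbb R$, $F(\pm\infty)$ denotes the limits at $\pm\infty$; for $y_1=-\infty$ the event $\{y_1<Y\le y_2\}$ is $\{Y\le y_2\}$, and for $y_2=+\infty$ the event $\{Y\le y_2\}$ is the whole space. *)

theory Defs
  imports "HOL-Probability.Probability"
begin

definition Fext :: "(real \<Rightarrow> real) \<Rightarrow> ereal \<Rightarrow> real" where
  "Fext F y = (case y of ereal r \<Rightarrow> F r | PInfty \<Rightarrow> Lim at_top F | MInfty \<Rightarrow> Lim at_bot F)"

text \<open>The inequality system (*) for d = 0,1 and all extended reals y1 < y2.
The event y1 < Y \<le> y2 is read with ereal comparisons, which gives exactly the
conventions for y1 = -oo and y2 = +oo.\<close>
definition star_ineq ::
  "'a measure \<Rightarrow> ('a \<Rightarrow> real) \<Rightarrow> ('a \<Rightarrow> real) \<Rightarrow> (real \<Rightarrow> real) \<Rightarrow> (real \<Rightarrow> real) \<Rightarrow> bool" where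
  "star_ineq M Y D F0 F1 \<longleftrightarrow>
     (\<forall>d\<in>{0::real, 1}. \<forall>y1 y2 :: ereal. y1 < y2 \<longrightarrow>
        Fext (if d = 0 then F0 else F1) y2 - Fext (if d = 0 then F0 else F1) y1 \<ge>
          measure M {\<omega> \<in> space M. y1 < ereal (Y \<omega>) \<and> ereal (Y \<omega>) \<le> y2 \<and> D \<omega> = d}
          + measure M {\<omega> \<in> space M. ereal (Y \<omega>) \<le> y2 \<and> D \<omega> = 1 - d}
              * (if y1 = -\<infinity> then 1 else 0))"

end

theory Submission
  imports Defs
begin


lemma Fext_cdf:
  assumes P: "prob_space M" and X: "X \<in> borel_measurable M"
  shows "Fext (cdf (distr M borel X)) y = measure M {\<omega>\<in>space M. ereal (X \<omega>) \<le> y}"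
proof -
  interpret prob_space M by fact
  interpret R: real_distribution "distr M borel X" using X by simp
  show ?thesis
  proof (cases y)
    case (real r)
    then show ?thesis by (simp add: Fext_def cdf_def measure_distr X vimage_def Int_def conj_commute)
  next
    case PInf
    have "Lim at_top (cdf (distr M borel X)) = 1"
      using R.cdf_lim_at_top_prob by (intro tendsto_Lim) auto
    then show ?thesis using PInf by (simp add: Fext_def prob_space)
  next
    case MInf
    have "Lim at_bot (cdf (distr M borel X)) = 0"
      using R.cdf_lim_at_bot by (intro tendsto_Lim) auto
    then show ?thesis using MInf by (simp add: Fext_def)
  qed
qed

lemma part1:
  assumes P: "prob_space M" and m: "Y0 \<in> borel_measurable M" "Y1 \<in> borel_measurable M"
    "Y \<in> borel_measurable M" "D \<in> borel_measurable M"
    and D01: "\<forall>\<omega>\<in>space M. D \<omega> \<in> {0, 1}"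
    and Yeq: "\<forall>\<omega>\<in>space M. Y \<omega> = Y1 \<omega> * D \<omega> + Y0 \<omega> * (1 - D \<omega>)"
    and AE: "AE \<omega> in M. (Y1 \<omega> > Y0 \<omega> \<longrightarrow> D \<omega> = 1) \<and> (Y1 \<omega> < Y0 \<omega> \<longrightarrow> D \<omega> = 0)"
  shows "star_ineq M Y D (cdf (distr M borel Y0)) (cdf (distr M borel Y1))"
  unfolding star_ineq_def
proof (intro ballI allI impI)
  interpret prob_space M by fact
  fix d :: real and y1 y2 :: ereal
  assume d: "d \<in> {0, 1}" and y12: "y1 < y2"
  define X where "X = (if d = 0 then Y0 else Y1)"
  have Xm: "X \<in> borel_measurable M" using m by (simp add: X_def)
  have F: "(if d = 0 then cdf (distr M borel Y0) else cdf (distr M borel Y1)) = cdf (distr M borel X)"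
    by (simp add: X_def)
  have eqd: "\<And>\<omega>. \<omega> \<in> space M \<Longrightarrow> D \<omega> = d \<Longrightarrow> X \<omega> = Y \<omega>"
    using Yeq d by (auto simp: X_def)
  have ae2: "AE \<omega> in M. \<omega> \<in> space M \<longrightarrow> D \<omega> = 1 - d \<longrightarrow> X \<omega> \<le> Y \<omega>"
    using AE
  proof eventually_elim
    case (elim \<omega>)
    then show ?case using Yeq d D01 by (auto simp: X_def)
  qed
  have Fx: "\<And>y. Fext (cdf (distr M borel X)) y = measure M {\<omega>\<in>space M. ereal (X \<omega>) \<le> y}"
    using Fext_cdf[OF P Xm] .
  have diff: "Fext (cdf (distr M borel X)) y2 - Fext (cdf (distr M borel X)) y1
      = measure M {\<omega>\<in>space M. y1 < ereal (X \<omega>) \<and> ereal (X \<omega>) \<le> y2}"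
  proof -
    have "{\<omega>\<in>space M. y1 < ereal (X \<omega>) \<and> ereal (X \<omega>) \<le> y2} =
        {\<omega>\<in>space M. ereal (X \<omega>) \<le> y2} - {\<omega>\<in>space M. ereal (X \<omega>) \<le> y1}"
      using y12 by auto
    then show ?thesis unfolding Fx using y12 Xm
      by (subst finite_measure_Diff[symmetric]) (auto intro: order.trans)
  qed
  show "Fext (if d = 0 then cdf (distr M borel Y0) else cdf (distr M borel Y1)) y2 -
       Fext (if d = 0 then cdf (distr M borel Y0) else cdf (distr M borel Y1)) y1 \<ge>
       measure M {\<omega> \<in> space M. y1 < ereal (Y \<omega>) \<and> ereal (Y \<omega>) \<le> y2 \<and> D \<omega> = d} +
       measure M {\<omega> \<in> space M. ereal (Y \<omega>) \<le> y2 \<and> D \<omega> = 1 - d} * (if y1 = - \<infinity> then 1 else 0)"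
  proof (cases "y1 = -\<infinity>")
    case True
    have "measure M {\<omega> \<in> space M. y1 < ereal (Y \<omega>) \<and> ereal (Y \<omega>) \<le> y2 \<and> D \<omega> = d} +
       measure M {\<omega> \<in> space M. ereal (Y \<omega>) \<le> y2 \<and> D \<omega> = 1 - d}
      = measure M ({\<omega> \<in> space M. y1 < ereal (Y \<omega>) \<and> ereal (Y \<omega>) \<le> y2 \<and> D \<omega> = d} \<union>
       {\<omega> \<in> space M. ereal (Y \<omega>) \<le> y2 \<and> D \<omega> = 1 - d})"
      using m d by (subst finite_measure_Union) auto
    also have "\<dots> \<le> measure M {\<omega>\<in>space M. y1 < ereal (X \<omega>) \<and> ereal (X \<omega>) \<le> y2}"
    proof (rule finite_measure_mono_AE)
      show "{\<omega> \<in> space M. y1 < ereal (X \<omega>) \<and> ereal (X \<omega>) \<le> y2} \<in> sets M" using Xm by measurable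
      show "AE x in M. x \<in> {\<omega> \<in> space M. y1 < ereal (Y \<omega>) \<and> ereal (Y \<omega>) \<le> y2 \<and> D \<omega> = d} \<union>
        {\<omega> \<in> space M. ereal (Y \<omega>) \<le> y2 \<and> D \<omega> = 1 - d} \<longrightarrow>
        x \<in> {\<omega> \<in> space M. y1 < ereal (X \<omega>) \<and> ereal (X \<omega>) \<le> y2}"
        using ae2
      proof eventually_elim
        case (elim x)
        then show ?case using True eqd[of x]
          by (auto intro: order.trans[of "ereal (X x)" "ereal (Y x)" y2])
      qed
    qed
    finally show ?thesis unfolding F diff using True by simp
  next
    case False
    have "measure M {\<omega> \<in> space M. y1 < ereal (Y \<omega>) \<and> ereal (Y \<omega>) \<le> y2 \<and> D \<omega> = d}
       \<le> measure M {\<omega>\<in>space M. y1 < ereal (X \<omega>) \<and> ereal (X \<omega>) \<le> y2}"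
      using eqd Xm by (intro finite_measure_mono) auto
    then show ?thesis unfolding F diff using False by simp
  qed
qed




lemma mono_lims:
  fixes F :: "real \<Rightarrow> real"
  assumes mono: "\<And>x y. x \<le> y \<Longrightarrow> F x \<le> F y" and b: "\<And>x. 0 \<le> F x \<and> F x \<le> 1"
    and gap: "Lim at_top F - Lim at_bot F \<ge> 1"
  shows "(F \<longlongrightarrow> 1) at_top" "(F \<longlongrightarrow> 0) at_bot" "Lim at_top F = 1" "Lim at_bot F = 0"
proof -
  have bddA: "bdd_above (range F)" using b by (intro bdd_aboveI[of _ 1]) auto
  have bddB: "bdd_below (range F)" using b by (intro bdd_belowI[of _ 0]) auto
  have t1: "(F \<longlongrightarrow> Sup (range F)) at_top"
  proof (rule increasing_tendsto)
    show "\<forall>\<^sub>F n in at_top. F n \<le> Sup (range F)" using bddA by (intro always_eventually allI cSUP_upper) auto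
    fix x assume "x < Sup (range F)"
    then obtain y0 where "x < F y0" using less_cSUP_iff[of UNIV F x] bddA by auto
    then show "\<forall>\<^sub>F n in at_top. x < F n"
      unfolding eventually_at_top_linorder using mono \<open>x < F y0\<close> by (meson less_le_trans)
  qed
  have t2: "(F \<longlongrightarrow> Inf (range F)) at_bot"
  proof (rule decreasing_tendsto)
    show "\<forall>\<^sub>F n in at_bot. Inf (range F) \<le> F n" using bddB by (intro always_eventually allI cINF_lower) auto
    fix x assume "Inf (range F) < x"
    then obtain y0 where "F y0 < x" using cINF_less_iff[of UNIV F x] bddB by auto
    then show "\<forall>\<^sub>F n in at_bot. F n < x"
      unfolding eventually_at_bot_linorder using mono \<open>F y0 < x\<close> by (meson le_less_trans)
  qed
  have L1: "Lim at_top F = Sup (range F)" using t1 by (intro tendsto_Lim) auto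
  have L2: "Lim at_bot F = Inf (range F)" using t2 by (intro tendsto_Lim) auto
  have "Sup (range F) \<le> 1" using b by (intro cSUP_least) auto
  moreover have "0 \<le> Inf (range F)" using b by (intro cINF_greatest) auto
  ultimately have "Sup (range F) = 1" "Inf (range F) = 0" using gap L1 L2 by auto
  then show "(F \<longlongrightarrow> 1) at_top" "(F \<longlongrightarrow> 0) at_bot" "Lim at_top F = 1" "Lim at_bot F = 0"
    using t1 t2 L1 L2 by auto
qed

locale p2 =
  fixes M :: "'a measure" and Y D :: "'a \<Rightarrow> real" and F0 F1 :: "real \<Rightarrow> real"
  assumes P: "prob_space M" and Ym: "Y \<in> borel_measurable M" and Dm: "D \<in> borel_measurable M"
    and D01: "\<forall>\<omega>\<in>space M. D \<omega> \<in> {0, 1}"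
    and rc0: "\<forall>x. continuous (at_right x) F0" and rc1: "\<forall>x. continuous (at_right x) F1"
    and b0: "\<forall>x. 0 \<le> F0 x \<and> F0 x \<le> 1" and b1: "\<forall>x. 0 \<le> F1 x \<and> F1 x \<le> 1"
    and star: "star_ineq M Y D F0 F1"
begin

interpretation prob_space M by (rule P)

definition "p0 = measure M {\<omega>\<in>space M. D \<omega> = 0}"
definition "p1 = measure M {\<omega>\<in>space M. D \<omega> = 1}"
definition "G0 y = measure M {\<omega>\<in>space M. Y \<omega> \<le> y \<and> D \<omega> = 0}"
definition "G1 y = measure M {\<omega>\<in>space M. Y \<omega> \<le> y \<and> D \<omega> = 1}"
definition "FY = cdf (distr M borel Y)"

lemma p01: "p0 + p1 = 1"
proof -
  have "p0 + p1 = measure M ({\<omega>\<in>space M. D \<omega> = 0} \<union> {\<omega>\<in>space M. D \<omega> = 1})"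
    unfolding p0_def p1_def using Dm by (subst finite_measure_Union) auto
  also have "{\<omega>\<in>space M. D \<omega> = 0} \<union> {\<omega>\<in>space M. D \<omega> = 1} = space M" using D01 by auto
  finally show ?thesis by (simp add: prob_space)
qed

lemma G0_le: "G0 y \<le> p0" unfolding G0_def p0_def using Dm by (intro finite_measure_mono) auto
lemma G1_le: "G1 y \<le> p1" unfolding G1_def p1_def using Dm by (intro finite_measure_mono) auto
lemma G0_ge: "0 \<le> G0 y" by (simp add: G0_def)
lemma G1_ge: "0 \<le> G1 y" by (simp add: G1_def)
lemma G0_mono: "x \<le> y \<Longrightarrow> G0 x \<le> G0 y" unfolding G0_def using Dm Ym by (intro finite_measure_mono) auto
lemma G1_mono: "x \<le> y \<Longrightarrow> G1 x \<le> G1 y" unfolding G1_def using Dm Ym by (intro finite_measure_mono) auto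

lemma FY_real: "real_distribution (distr M borel Y)" using Ym by simp

lemma FY_eq: "FY y = measure M {\<omega>\<in>space M. Y \<omega> \<le> y}"
  by (simp add: FY_def cdf_def measure_distr Ym vimage_def Int_def conj_commute)

lemma G0_sq: "p0 + FY y - 1 \<le> G0 y"
proof -
  have "{\<omega>\<in>space M. D \<omega> = 0} \<subseteq> {\<omega>\<in>space M. Y \<omega> \<le> y \<and> D \<omega> = 0} \<union> (space M - {\<omega>\<in>space M. Y \<omega> \<le> y})"
    by auto
  then have "p0 \<le> measure M ({\<omega>\<in>space M. Y \<omega> \<le> y \<and> D \<omega> = 0} \<union> (space M - {\<omega>\<in>space M. Y \<omega> \<le> y}))"
    unfolding p0_def using Ym Dm by (intro finite_measure_mono) auto
  also have "\<dots> \<le> G0 y + measure M (space M - {\<omega>\<in>space M. Y \<omega> \<le> y})"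
    unfolding G0_def using Ym Dm by (intro measure_Un_le) auto
  also have "measure M (space M - {\<omega>\<in>space M. Y \<omega> \<le> y}) = 1 - FY y"
    unfolding FY_eq using Ym by (subst prob_compl) auto
  finally show ?thesis by simp
qed

lemma G1_sq: "p1 + FY y - 1 \<le> G1 y"
proof -
  have "{\<omega>\<in>space M. D \<omega> = 1} \<subseteq> {\<omega>\<in>space M. Y \<omega> \<le> y \<and> D \<omega> = 1} \<union> (space M - {\<omega>\<in>space M. Y \<omega> \<le> y})"
    by auto
  then have "p1 \<le> measure M ({\<omega>\<in>space M. Y \<omega> \<le> y \<and> D \<omega> = 1} \<union> (space M - {\<omega>\<in>space M. Y \<omega> \<le> y}))"
    unfolding p1_def using Ym Dm by (intro finite_measure_mono) auto
  also have "\<dots> \<le> G1 y + measure M (space M - {\<omega>\<in>space M. Y \<omega> \<le> y})"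
    unfolding G1_def using Ym Dm by (intro measure_Un_le) auto
  also have "measure M (space M - {\<omega>\<in>space M. Y \<omega> \<le> y}) = 1 - FY y"
    unfolding FY_eq using Ym by (subst prob_compl) auto
  finally show ?thesis by simp
qed

lemma FY_top: "(FY \<longlongrightarrow> 1) at_top"
  unfolding FY_def using real_distribution.cdf_lim_at_top_prob[OF FY_real] .

lemma star_d: "d \<in> {0,1} \<Longrightarrow> y1 < y2 \<Longrightarrow>
  Fext (if d = 0 then F0 else F1) y2 - Fext (if d = 0 then F0 else F1) y1 \<ge>
          measure M {\<omega> \<in> space M. y1 < ereal (Y \<omega>) \<and> ereal (Y \<omega>) \<le> y2 \<and> D \<omega> = d}
          + measure M {\<omega> \<in> space M. ereal (Y \<omega>) \<le> y2 \<and> D \<omega> = 1 - d}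
              * (if y1 = -\<infinity> then 1 else 0)"
  using star unfolding star_ineq_def by blast

lemma Gdiff: "r \<le> s \<Longrightarrow> measure M {\<omega>\<in>space M. r < Y \<omega> \<and> Y \<omega> \<le> s \<and> D \<omega> = d}
   = measure M {\<omega>\<in>space M. Y \<omega> \<le> s \<and> D \<omega> = d} - measure M {\<omega>\<in>space M. Y \<omega> \<le> r \<and> D \<omega> = d}"
proof -
  assume rs: "r \<le> s"
  define A where "A = {\<omega>\<in>space M. Y \<omega> \<le> s \<and> D \<omega> = d}"
  define B where "B = {\<omega>\<in>space M. Y \<omega> \<le> r \<and> D \<omega> = d}"
  have e: "{\<omega>\<in>space M. r < Y \<omega> \<and> Y \<omega> \<le> s \<and> D \<omega> = d} = A - B" unfolding A_def B_def by auto
  have s: "B \<subseteq> A" using rs unfolding A_def B_def by auto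
  have m: "A \<in> sets M" "B \<in> sets M" unfolding A_def B_def using Ym Dm by measurable
  show ?thesis unfolding e using finite_measure_Diff[OF m s] by (simp add: A_def B_def)
qed

lemma Gcompl: "measure M {\<omega>\<in>space M. r < Y \<omega> \<and> D \<omega> = d}
   = measure M {\<omega>\<in>space M. D \<omega> = d} - measure M {\<omega>\<in>space M. Y \<omega> \<le> r \<and> D \<omega> = d}"
proof -
  define A where "A = {\<omega>\<in>space M. D \<omega> = d}"
  define B where "B = {\<omega>\<in>space M. Y \<omega> \<le> r \<and> D \<omega> = d}"
  have e: "{\<omega>\<in>space M. r < Y \<omega> \<and> D \<omega> = d} = A - B" unfolding A_def B_def by auto
  have s: "B \<subseteq> A" unfolding A_def B_def by auto
  have m: "A \<in> sets M" "B \<in> sets M" unfolding A_def B_def using Ym Dm by measurable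
  show ?thesis unfolding e using finite_measure_Diff[OF m s] by (simp add: A_def B_def)
qed

lemma Fext_simps: "Fext F (ereal r) = F r" "Fext F \<infinity> = Lim at_top F" "Fext F (-\<infinity>) = Lim at_bot F"
  by (simp_all add: Fext_def)

lemma F0_fin: "r < s \<Longrightarrow> G0 s - G0 r \<le> F0 s - F0 r"
  using star_d[of 0 "ereal r" "ereal s"] Gdiff[of r s 0] by (simp add: Fext_simps G0_def)
lemma F1_fin: "r < s \<Longrightarrow> G1 s - G1 r \<le> F1 s - F1 r"
  using star_d[of 1 "ereal r" "ereal s"] Gdiff[of r s 1] by (simp add: Fext_simps G1_def)

lemma F0_mono: "x \<le> y \<Longrightarrow> F0 x \<le> F0 y"
  using F0_fin[of x y] G0_mono[of x y] by (cases "x = y") auto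
lemma F1_mono: "x \<le> y \<Longrightarrow> F1 x \<le> F1 y"
  using F1_fin[of x y] G1_mono[of x y] by (cases "x = y") auto

lemma F0_gap: "Lim at_top F0 - Lim at_bot F0 \<ge> 1"
  using star_d[of 0 "-\<infinity>" "\<infinity>"] p01 by (simp add: Fext_simps p0_def p1_def)
lemma F1_gap: "Lim at_top F1 - Lim at_bot F1 \<ge> 1"
  using star_d[of 1 "-\<infinity>" "\<infinity>"] p01 by (simp add: Fext_simps p0_def p1_def)

lemmas F0_lims = mono_lims[OF F0_mono _ F0_gap, simplified b0, simplified]
lemmas F1_lims = mono_lims[OF F1_mono _ F1_gap, simplified b1, simplified]

lemma F0_bot: "G0 y + G1 y \<le> F0 y"
  using star_d[of 0 "-\<infinity>" "ereal y"] F0_lims by (simp add: Fext_simps G0_def G1_def)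
lemma F1_bot: "G0 y + G1 y \<le> F1 y"
  using star_d[of 1 "-\<infinity>" "ereal y"] F1_lims by (simp add: Fext_simps G0_def G1_def)
lemma F0_top: "p0 - G0 y \<le> 1 - F0 y"
  using star_d[of 0 "ereal y" "\<infinity>"] F0_lims Gcompl[of y 0] by (simp add: Fext_simps G0_def p0_def)
lemma F1_top: "p1 - G1 y \<le> 1 - F1 y"
  using star_d[of 1 "ereal y" "\<infinity>"] F1_lims Gcompl[of y 1] by (simp add: Fext_simps G1_def p1_def)

end



lemma quant_galois:
  fixes K :: "real \<Rightarrow> real"
  assumes mono: "\<And>x y. x \<le> y \<Longrightarrow> K x \<le> K y" and rc: "\<And>x. continuous (at_right x) K"
    and lo: "K y0 < u" and hi: "u \<le> K y1"
  shows "Inf {y. u \<le> K y} \<le> x \<longleftrightarrow> u \<le> K x"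
proof -
  let ?S = "{y. u \<le> K y}"
  have ne: "?S \<noteq> {}" using hi by auto
  have bdd: "bdd_below ?S"
  proof
    fix y assume "y \<in> ?S"
    then have "u \<le> K y" by simp
    then show "y0 \<le> y" using lo mono[of y y0] by (cases "y \<le> y0") auto
  qed
  have inS: "u \<le> K (Inf ?S)"
  proof -
    have lim: "(K \<longlongrightarrow> K (Inf ?S)) (at_right (Inf ?S))"
      using rc[of "Inf ?S"] by (simp add: continuous_within)
    have ev: "eventually (\<lambda>y. u \<le> K y) (at_right (Inf ?S))"
    proof -
      have "u \<le> K y" if "Inf ?S < y" for y
      proof -
        obtain s where "s \<in> ?S" "s < y" using cInf_lessD[OF ne \<open>Inf ?S < y\<close>] by auto
        then show ?thesis using mono[of s y] by auto
      qed
      then show ?thesis using eventually_at_right_less[of "Inf ?S"]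
        by (auto elim: eventually_mono)
    qed
    show ?thesis
      by (rule tendsto_lowerbound[OF lim ev]) simp
  qed
  show ?thesis
  proof
    assume "Inf ?S \<le> x" then show "u \<le> K x" using inS mono by (meson order.trans)
  next
    assume "u \<le> K x" then show "Inf ?S \<le> x" using bdd by (intro cInf_lower) auto
  qed
qed

lemma rc_comp_arctan:
  fixes F :: "real \<Rightarrow> real"
  assumes "continuous (at_right (c + arctan x)) F"
  shows "continuous (at_right x) (\<lambda>y. F (c + arctan y))"
proof -
  have F: "(F \<longlongrightarrow> F (c + arctan x)) (at_right (c + arctan x))"
    using assms by (simp add: continuous_within)
  have g: "filterlim (\<lambda>y. c + arctan y) (at_right (c + arctan x)) (at_right x)"
  proof (subst filterlim_at, intro conjI)
    show "\<forall>\<^sub>F y in at_right x. c + arctan y \<in> {c + arctan x<..} \<and> c + arctan y \<noteq> c + arctan x"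
      using eventually_at_right_less[of x] by (rule eventually_mono) (smt (verit) arctan_less_iff greaterThan_iff)
    have "((\<lambda>y. c + arctan y) \<longlongrightarrow> c + arctan x) (at x)"
      by (intro tendsto_intros)
    then show "((\<lambda>y. c + arctan y) \<longlongrightarrow> c + arctan x) (at_right x)"
      by (rule tendsto_mono[rotated]) (simp add: at_le)
  qed
  show ?thesis unfolding continuous_within
    using filterlim_compose[OF F g] by (simp add: o_def)
qed

definition Qf :: "(real \<Rightarrow> real) \<Rightarrow> real \<Rightarrow> real" where
  "Qf K u = Inf {y. u \<le> K y}"

context p2
begin

interpretation prob_space M by (rule P)

definition "Z \<omega> = arctan (Y \<omega>) + 4 * D \<omega>"
definition "FZ = cdf (distr M borel Z)"
definition "K0 y = F0 y - G0 y + p0"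
definition "K1 y = F1 y - G1 y"

lemma Zm: "Z \<in> borel_measurable M" unfolding Z_def using Ym Dm by measurable

lemma FZ_real: "real_distribution (distr M borel Z)" using Zm by simp

lemma FZ_eq: "FZ z = measure M {\<omega>\<in>space M. Z \<omega> \<le> z}"
  by (simp add: FZ_def cdf_def measure_distr Zm vimage_def Int_def conj_commute)

lemma arct: "- (pi/2) < arctan x \<and> arctan x < pi/2 \<and> pi < 4"
  using arctan_bounded pi_less_4 by auto

lemma FZ_arctan: "FZ (arctan y) = G0 y"
proof -
  have "{\<omega>\<in>space M. Z \<omega> \<le> arctan y} = {\<omega>\<in>space M. Y \<omega> \<le> y \<and> D \<omega> = 0}"
  proof (intro set_eqI iffI)
    fix \<omega> assume "\<omega> \<in> {\<omega>\<in>space M. Z \<omega> \<le> arctan y}"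
    then show "\<omega> \<in> {\<omega>\<in>space M. Y \<omega> \<le> y \<and> D \<omega> = 0}"
      using D01 arct[of "Y \<omega>"] arct[of y] by (auto simp: Z_def arctan_le_iff)
  qed (auto simp: Z_def arctan_le_iff)
  then show ?thesis by (simp add: FZ_eq G0_def)
qed

lemma FZ_4arctan: "FZ (4 + arctan y) = p0 + G1 y"
proof -
  have "{\<omega>\<in>space M. Z \<omega> \<le> 4 + arctan y} = {\<omega>\<in>space M. D \<omega> = 0} \<union> {\<omega>\<in>space M. Y \<omega> \<le> y \<and> D \<omega> = 1}"
  proof (intro set_eqI iffI)
    fix \<omega> assume "\<omega> \<in> {\<omega>\<in>space M. Z \<omega> \<le> 4 + arctan y}"
    then show "\<omega> \<in> {\<omega>\<in>space M. D \<omega> = 0} \<union> {\<omega>\<in>space M. Y \<omega> \<le> y \<and> D \<omega> = 1}"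
      using D01 by (auto simp: Z_def arctan_le_iff)
  next
    fix \<omega> assume "\<omega> \<in> {\<omega>\<in>space M. D \<omega> = 0} \<union> {\<omega>\<in>space M. Y \<omega> \<le> y \<and> D \<omega> = 1}"
    then show "\<omega> \<in> {\<omega>\<in>space M. Z \<omega> \<le> 4 + arctan y}"
      using arct[of "Y \<omega>"] arct[of y] by (auto simp: Z_def arctan_le_iff)
  qed
  then show ?thesis unfolding FZ_eq p0_def G1_def using Ym Dm
    by (simp, subst finite_measure_Union) auto
qed

lemma FZ_p0: "FZ z = p0" if "pi/2 \<le> z" "z \<le> 4 - pi/2"
proof -
  have "{\<omega>\<in>space M. Z \<omega> \<le> z} = {\<omega>\<in>space M. D \<omega> = 0}"
  proof (intro set_eqI iffI)
    fix \<omega> assume "\<omega> \<in> {\<omega>\<in>space M. Z \<omega> \<le> z}"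
    then show "\<omega> \<in> {\<omega>\<in>space M. D \<omega> = 0}"
      using D01 arct[of "Y \<omega>"] that by (auto simp: Z_def)
  next
    fix \<omega> assume "\<omega> \<in> {\<omega>\<in>space M. D \<omega> = 0}"
    then show "\<omega> \<in> {\<omega>\<in>space M. Z \<omega> \<le> z}"
      using arct[of "Y \<omega>"] that by (auto simp: Z_def)
  qed
  then show ?thesis by (simp add: FZ_eq p0_def)
qed

lemma FZ_2: "FZ 2 = p0" using FZ_p0 pi_less_4 by simp
lemma FZ_mid: "FZ (4 - pi/2) = p0" using FZ_p0 pi_less_4 by simp

lemma FZ_low: "FZ (- (pi/2)) = 0"
proof -
  have e: "{\<omega>\<in>space M. Z \<omega> \<le> - (pi/2)} = {}"
    using D01 arct by (smt (verit) Collect_empty_eq Z_def insert_iff singleton_iff)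
  show ?thesis unfolding FZ_eq e by simp
qed

lemma FZ_mono: "x \<le> y \<Longrightarrow> FZ x \<le> FZ y"
  unfolding FZ_def using finite_borel_measure.cdf_nondecreasing[OF real_distribution.finite_borel_measure_M[OF FZ_real]] by blast
lemma FZ_rc: "continuous (at_right x) FZ"
  unfolding FZ_def using finite_borel_measure.cdf_is_right_cont[OF real_distribution.finite_borel_measure_M[OF FZ_real]] by blast
lemma FZ_bot: "(FZ \<longlongrightarrow> 0) at_bot"
  unfolding FZ_def using finite_borel_measure.cdf_lim_at_bot[OF real_distribution.finite_borel_measure_M[OF FZ_real]] by blast
lemma FZ_top: "(FZ \<longlongrightarrow> 1) at_top"
  unfolding FZ_def using real_distribution.cdf_lim_at_top_prob[OF FZ_real] by blast

lemma G0_rc: "continuous (at_right x) G0"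
proof -
  have "continuous (at_right x) (\<lambda>y. FZ (0 + arctan y))"
    by (rule rc_comp_arctan) (rule FZ_rc)
  then show ?thesis using FZ_arctan by simp
qed

lemma G1_rc: "continuous (at_right x) G1"
proof -
  have "continuous (at_right x) (\<lambda>y. FZ (4 + arctan y))"
    by (rule rc_comp_arctan) (rule FZ_rc)
  then have "continuous (at_right x) (\<lambda>y. FZ (4 + arctan y) - p0)"
    by (intro continuous_intros)
  then show ?thesis using FZ_4arctan by simp
qed

lemma K0_rc: "continuous (at_right x) K0"
  unfolding K0_def using rc0 G0_rc by (intro continuous_intros) auto
lemma K1_rc: "continuous (at_right x) K1"
  unfolding K1_def using rc1 G1_rc by (intro continuous_intros) auto

lemma K0_mono: "x \<le> y \<Longrightarrow> K0 x \<le> K0 y"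
  unfolding K0_def using F0_fin[of x y] by (cases "x = y") auto
lemma K1_mono: "x \<le> y \<Longrightarrow> K1 x \<le> K1 y"
  unfolding K1_def using F1_fin[of x y] by (cases "x = y") auto

lemma K0_ge: "p0 + G1 y \<le> K0 y" unfolding K0_def using F0_bot[of y] by simp
lemma K0_le: "K0 y \<le> 1" unfolding K0_def using F0_top[of y] by simp
lemma K1_ge: "G0 y \<le> K1 y" unfolding K1_def using F1_bot[of y] by simp
lemma K1_le: "K1 y \<le> p0" unfolding K1_def using F1_top[of y] p01 by simp

lemma K0_lo: "p0 < u \<Longrightarrow> \<exists>y. K0 y < u"
proof -
  assume "p0 < u"
  then have "eventually (\<lambda>y. F0 y < u - p0) at_bot"
    using F0_lims(2) by (intro order_tendstoD) auto
  then obtain y where "F0 y < u - p0" by (auto simp: eventually_at_bot_linorder)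
  then show ?thesis using G0_ge[of y] unfolding K0_def by (intro exI[of _ y]) simp
qed

lemma K0_hi: "u < 1 \<Longrightarrow> \<exists>y. u \<le> K0 y"
proof -
  assume "u < 1"
  then have "eventually (\<lambda>y. u < F0 y) at_top"
    using F0_lims(1) by (intro order_tendstoD) auto
  then obtain y where "u < F0 y" by (auto simp: eventually_at_top_linorder)
  then show ?thesis using G0_le[of y] unfolding K0_def by (intro exI[of _ y]) simp
qed

lemma K1_lo: "0 < u \<Longrightarrow> \<exists>y. K1 y < u"
proof -
  assume "0 < u"
  then have "eventually (\<lambda>y. F1 y < u) at_bot"
    using F1_lims(2) by (intro order_tendstoD) auto
  then obtain y where "F1 y < u" by (auto simp: eventually_at_bot_linorder)
  then show ?thesis using G1_ge[of y] unfolding K1_def by (intro exI[of _ y]) simp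
qed

lemma K1_hi: "u < p0 \<Longrightarrow> \<exists>y. u \<le> K1 y"
proof -
  assume "u < p0"
  then have "eventually (\<lambda>y. u + p1 < F1 y) at_top"
    using F1_lims(1) p01 by (intro order_tendstoD) auto
  then obtain y where "u + p1 < F1 y" by (auto simp: eventually_at_top_linorder)
  then show ?thesis using G1_le[of y] unfolding K1_def by (intro exI[of _ y]) simp
qed

lemma FZ_lo: "0 < u \<Longrightarrow> \<exists>y. FZ y < u"
proof -
  assume "0 < u"
  then have "eventually (\<lambda>y. FZ y < u) at_bot"
    using FZ_bot by (intro order_tendstoD) auto
  then show ?thesis by (auto simp: eventually_at_bot_linorder)
qed

lemma FZ_hi: "u < 1 \<Longrightarrow> \<exists>y. u \<le> FZ y"
proof -
  assume "u < 1"
  then have "eventually (\<lambda>y. u < FZ y) at_top"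
    using FZ_top by (intro order_tendstoD) auto
  then show ?thesis by (auto simp: eventually_at_top_linorder intro: less_imp_le)
qed

lemma G0_hi: "u < p0 \<Longrightarrow> \<exists>y. u \<le> G0 y"
proof -
  assume "u < p0"
  then have "eventually (\<lambda>y. 1 - p0 + u < FY y) at_top"
    using FY_top by (intro order_tendstoD) auto
  then obtain y where "1 - p0 + u < FY y" by (auto simp: eventually_at_top_linorder)
  then show ?thesis using G0_sq[of y] by (intro exI[of _ y]) simp
qed

lemma G1_hi: "u < 1 \<Longrightarrow> \<exists>y. u \<le> p0 + G1 y"
proof -
  assume "u < 1"
  then have "eventually (\<lambda>y. u < FY y) at_top"
    using FY_top by (intro order_tendstoD) auto
  then obtain y where "u < FY y" by (auto simp: eventually_at_top_linorder)
  then show ?thesis using G1_sq[of y] p01 by (intro exI[of _ y]) simp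
qed

definition "Zt = Qf FZ"

lemma Zt_gal: "0 < u \<Longrightarrow> u < 1 \<Longrightarrow> Zt u \<le> z \<longleftrightarrow> u \<le> FZ z"
  using FZ_lo[of u] FZ_hi[of u] unfolding Zt_def Qf_def
  using quant_galois[OF FZ_mono FZ_rc] by blast

lemma Q0_gal: "p0 < u \<Longrightarrow> u < 1 \<Longrightarrow> Qf K0 u \<le> y \<longleftrightarrow> u \<le> K0 y"
  using K0_lo[of u] K0_hi[of u] unfolding Qf_def
  using quant_galois[OF K0_mono K0_rc] by blast

lemma Q1_gal: "0 < u \<Longrightarrow> u < p0 \<Longrightarrow> Qf K1 u \<le> y \<longleftrightarrow> u \<le> K1 y"
  using K1_lo[of u] K1_hi[of u] unfolding Qf_def
  using quant_galois[OF K1_mono K1_rc] by blast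

lemma Zt_le2: "0 < u \<Longrightarrow> u < 1 \<Longrightarrow> Zt u \<le> 2 \<longleftrightarrow> u \<le> p0"
  using Zt_gal FZ_2 by simp

lemma Zt_low: "0 < u \<Longrightarrow> u < 1 \<Longrightarrow> - (pi/2) < Zt u"
  using Zt_gal[of u "- (pi/2)"] FZ_low by (auto simp: not_le[symmetric])

lemma Zt_0hi: "0 < u \<Longrightarrow> u < p0 \<Longrightarrow> Zt u < pi/2"
proof -
  assume u: "0 < u" "u < p0"
  then have u1: "u < 1" using p01 G1_ge[of 0] G1_le[of 0] by linarith
  obtain y where "u \<le> G0 y" using G0_hi u by blast
  then have "Zt u \<le> arctan y" using Zt_gal[OF u(1) u1] FZ_arctan by simp
  then show ?thesis using arct[of y] by simp
qed

lemma Zt_1lo: "p0 < u \<Longrightarrow> u < 1 \<Longrightarrow> 4 - pi/2 < Zt u"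
proof -
  assume u: "p0 < u" "u < 1"
  then have "0 < u" using G0_ge[of 0] G0_le[of 0] by linarith
  then show ?thesis using Zt_gal[of u "4 - pi/2"] FZ_mid u by (auto simp: not_le[symmetric])
qed

lemma Zt_hi: "0 < u \<Longrightarrow> u < 1 \<Longrightarrow> Zt u < 4 + pi/2"
proof -
  assume u: "0 < u" "u < 1"
  obtain y where "u \<le> p0 + G1 y" using G1_hi u by blast
  then have "Zt u \<le> 4 + arctan y" using Zt_gal[OF u] FZ_4arctan by simp
  then show ?thesis using arct[of y] by simp
qed

end



definition Pm :: "real measure" where "Pm = restrict_space lborel {0<..<1}"

lemma Pm_prob: "prob_space Pm"
  unfolding Pm_def by (rule prob_space_restrict_space) auto

lemma space_Pm: "space Pm = {0<..<1}"
  unfolding Pm_def by simp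

lemma sets_Pm: "A \<in> sets Pm \<longleftrightarrow> A \<subseteq> {0<..<1} \<and> A \<in> sets borel"
  unfolding Pm_def by (subst sets_restrict_space_iff) auto

lemma Pm_Ioo: "0 \<le> a \<Longrightarrow> a \<le> b \<Longrightarrow> b \<le> 1 \<Longrightarrow> measure Pm {a<..<b} = b - a"
  unfolding Pm_def by (subst measure_restrict_space) auto

lemma Pm_two: "0 \<le> a \<Longrightarrow> a \<le> p \<Longrightarrow> p \<le> b \<Longrightarrow> b \<le> 1 \<Longrightarrow>
   measure Pm ({0<..<a} \<union> {p<..<b}) = a + (b - p)"
proof -
  assume h: "0 \<le> a" "a \<le> p" "p \<le> b" "b \<le> 1"
  interpret prob_space Pm by (rule Pm_prob)
  have "measure Pm ({0<..<a} \<union> {p<..<b}) = measure Pm {0<..<a} + measure Pm {p<..<b}"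
    using h by (intro finite_measure_Union) (auto simp: sets_Pm)
  then show ?thesis using h by (simp add: Pm_Ioo)
qed

lemma AE_Pm_neq: "AE u in Pm. u \<noteq> c"
  unfolding Pm_def by (subst AE_restrict_space_iff) (auto intro: AE_mp[OF AE_lborel_singleton[of c]])

lemma Pm_measure_AE:
  assumes "AE u in Pm. u \<in> S \<longleftrightarrow> u \<in> T" "S \<in> sets Pm" "T \<in> sets Pm"
  shows "measure Pm S = measure Pm T"
  by (rule measure_eq_AE[OF assms])

lemma id_Pm[measurable]: "(\<lambda>x. x) \<in> borel_measurable Pm"
  unfolding Pm_def by (rule measurable_restrict_space1) (simp add: measurable_ident_sets)

definition dec1 :: "real \<Rightarrow> real" where
  "dec1 z = (if z \<le> 2 then tan z else tan (z - 4))"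
definition dec2 :: "real \<Rightarrow> real" where
  "dec2 z = (if z \<le> 2 then 0 else 1)"
definition dec :: "real \<Rightarrow> real \<times> real" where
  "dec z = (dec1 z, dec2 z)"

lemma dec1_meas[measurable]: "dec1 \<in> borel_measurable borel"
  unfolding dec1_def tan_def by measurable
lemma dec2_meas[measurable]: "dec2 \<in> borel_measurable borel"
  unfolding dec2_def by measurable
lemma dec_meas[measurable]: "dec \<in> borel \<rightarrow>\<^sub>M borel \<Otimes>\<^sub>M borel"
  unfolding dec_def by measurable

context p2
begin

definition "Ytf u = dec1 (Zt u)"
definition "Dtf u = dec2 (Zt u)"
definition "Y0f u = (if u \<le> p0 then Ytf u else Qf K0 u)"
definition "Y1f u = (if u < p0 then Qf K1 u else Ytf u)"

lemma Zt_meas[measurable]: "Zt \<in> borel_measurable Pm"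
proof (subst borel_measurable_iff_le, intro allI)
  fix a
  have "{w \<in> space Pm. Zt w \<le> a} = {w \<in> space Pm. w \<le> FZ a}"
    using Zt_gal by (auto simp: space_Pm)
  also have "\<dots> \<in> sets Pm" by measurable
  finally show "{w \<in> space Pm. Zt w \<le> a} \<in> sets Pm" .
qed

lemma Ytf_meas[measurable]: "Ytf \<in> borel_measurable Pm"
  unfolding Ytf_def by measurable
lemma Dtf_meas[measurable]: "Dtf \<in> borel_measurable Pm"
  unfolding Dtf_def by measurable

lemma Dtf_eq: "u \<in> space Pm \<Longrightarrow> Dtf u = (if u \<le> p0 then 0 else 1)"
  using Zt_le2[of u] by (auto simp: Dtf_def dec2_def space_Pm)

lemma Ytf_0: "u \<in> space Pm \<Longrightarrow> u < p0 \<Longrightarrow> Ytf u \<le> y \<longleftrightarrow> u \<le> G0 y"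
proof -
  assume u: "u \<in> space Pm" "u < p0"
  then have u01: "0 < u" "u < 1" by (auto simp: space_Pm)
  have r: "- (pi/2) < Zt u" "Zt u < pi/2" using Zt_low[OF u01] Zt_0hi[OF u01(1) u(2)] by auto
  have "Zt u \<le> 2" using Zt_le2[OF u01] u by simp
  then have "Ytf u = tan (Zt u)" by (simp add: Ytf_def dec1_def)
  then have "Ytf u \<le> y \<longleftrightarrow> arctan (tan (Zt u)) \<le> arctan y" by (simp add: arctan_le_iff)
  also have "\<dots> \<longleftrightarrow> Zt u \<le> arctan y" using arctan_tan[OF r] by simp
  also have "\<dots> \<longleftrightarrow> u \<le> G0 y" using Zt_gal[OF u01] FZ_arctan by simp
  finally show ?thesis .
qed

lemma Ytf_1: "u \<in> space Pm \<Longrightarrow> p0 < u \<Longrightarrow> Ytf u \<le> y \<longleftrightarrow> u \<le> p0 + G1 y"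
proof -
  assume u: "u \<in> space Pm" "p0 < u"
  then have u01: "0 < u" "u < 1" by (auto simp: space_Pm)
  have r: "- (pi/2) < Zt u - 4" "Zt u - 4 < pi/2" using Zt_1lo[OF u(2) u01(2)] Zt_hi[OF u01] by auto
  have "\<not> Zt u \<le> 2" using Zt_le2[OF u01] u by simp
  then have "Ytf u = tan (Zt u - 4)" by (simp add: Ytf_def dec1_def)
  then have "Ytf u \<le> y \<longleftrightarrow> arctan (tan (Zt u - 4)) \<le> arctan y" by (simp add: arctan_le_iff)
  also have "\<dots> \<longleftrightarrow> Zt u \<le> 4 + arctan y" using arctan_tan[OF r] by (simp add: diff_le_eq add.commute)
  also have "\<dots> \<longleftrightarrow> u \<le> p0 + G1 y" using Zt_gal[OF u01] FZ_4arctan by simp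
  finally show ?thesis .
qed

lemma Y0f_le: "u \<in> space Pm \<Longrightarrow> u \<noteq> p0 \<Longrightarrow>
   Y0f u \<le> y \<longleftrightarrow> (u < p0 \<and> u \<le> G0 y) \<or> (p0 < u \<and> u \<le> K0 y)"
  using Ytf_0[of u y] Q0_gal[of u y] by (auto simp: Y0f_def space_Pm)

lemma Y1f_le: "u \<in> space Pm \<Longrightarrow> u \<noteq> p0 \<Longrightarrow>
   Y1f u \<le> y \<longleftrightarrow> (u < p0 \<and> u \<le> K1 y) \<or> (p0 < u \<and> u \<le> p0 + G1 y)"
  using Ytf_1[of u y] Q1_gal[of u y] by (auto simp: Y1f_def space_Pm)

lemma Y0f_meas[measurable]: "Y0f \<in> borel_measurable Pm"
proof (subst borel_measurable_iff_le, intro allI)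
  fix a
  have "{w \<in> space Pm. Y0f w \<le> a} = {w \<in> space Pm. (w \<le> p0 \<and> Ytf w \<le> a) \<or> (p0 < w \<and> w \<le> K0 a)}"
    using Q0_gal by (auto simp: space_Pm Y0f_def) (meson not_le)
  also have "\<dots> \<in> sets Pm" by measurable
  finally show "{w \<in> space Pm. Y0f w \<le> a} \<in> sets Pm" .
qed

lemma Y1f_meas[measurable]: "Y1f \<in> borel_measurable Pm"
proof (subst borel_measurable_iff_le, intro allI)
  fix a
  have "{w \<in> space Pm. Y1f w \<le> a} = {w \<in> space Pm. (w < p0 \<and> w \<le> K1 a) \<or> (p0 \<le> w \<and> Ytf w \<le> a)}"
    by (auto simp: space_Pm Y1f_def Q1_gal)
  also have "\<dots> \<in> sets Pm" by measurable
  finally show "{w \<in> space Pm. Y1f w \<le> a} \<in> sets Pm" .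
qed

lemma ident: "u \<in> space Pm \<Longrightarrow> Ytf u = Y1f u * Dtf u + Y0f u * (1 - Dtf u)"
  using Dtf_eq[of u] by (auto simp: Y0f_def Y1f_def)

lemma roy: "u \<in> space Pm \<Longrightarrow> (Y1f u > Y0f u \<longrightarrow> Dtf u = 1) \<and> (Y1f u < Y0f u \<longrightarrow> Dtf u = 0)"
proof -
  assume u: "u \<in> space Pm"
  then have u01: "0 < u" "u < 1" by (auto simp: space_Pm)
  consider "u < p0" | "u = p0" | "p0 < u" by linarith
  then show ?thesis
  proof cases
    case 1
    have "u \<le> G0 (Ytf u)" using Ytf_0[OF u 1, of "Ytf u"] by simp
    then have "u \<le> K1 (Ytf u)" using K1_ge[of "Ytf u"] by simp
    then have "Y1f u \<le> Y0f u" using Q1_gal[OF u01(1) 1] 1 by (simp add: Y0f_def Y1f_def)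
    then show ?thesis using Dtf_eq[OF u] 1 by auto
  next
    case 2
    then show ?thesis using Dtf_eq[OF u] by (simp add: Y0f_def Y1f_def)
  next
    case 3
    have "u \<le> p0 + G1 (Ytf u)" using Ytf_1[OF u 3, of "Ytf u"] by simp
    then have "u \<le> K0 (Ytf u)" using K0_ge[of "Ytf u"] by simp
    then have "Y0f u \<le> Y1f u" using Q0_gal[OF 3 u01(2)] 3 by (simp add: Y0f_def Y1f_def)
    then show ?thesis using Dtf_eq[OF u] 3 by auto
  qed
qed

end



context p2
begin

interpretation prob_space M by (rule P)

lemma FZ_b: "0 \<le> FZ z" "FZ z \<le> 1"
  unfolding FZ_def
  using finite_borel_measure.cdf_nonneg[OF real_distribution.finite_borel_measure_M[OF FZ_real]]
    real_distribution.cdf_bounded_prob[OF FZ_real] by auto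

lemma cdfZt: "measure Pm {u\<in>space Pm. Zt u \<le> z} = FZ z"
proof -
  have "measure Pm {u\<in>space Pm. Zt u \<le> z} = measure Pm {0<..<FZ z}"
  proof (rule Pm_measure_AE)
    show "AE u in Pm. (u \<in> {u\<in>space Pm. Zt u \<le> z}) = (u \<in> {0<..<FZ z})"
      using AE_space AE_Pm_neq[of "FZ z"]
    proof eventually_elim
      case (elim u)
      then show ?case using Zt_gal[of u z] FZ_b[of z] by (auto simp: space_Pm)
    qed
    show "{u\<in>space Pm. Zt u \<le> z} \<in> sets Pm" by measurable
    show "{0<..<FZ z} \<in> sets Pm" using FZ_b[of z] by (auto simp: sets_Pm)
  qed
  also have "\<dots> = FZ z" using FZ_b[of z] by (simp add: Pm_Ioo)
  finally show ?thesis .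
qed

lemma law_Zt: "distr Pm borel Zt = distr M borel Z"
proof (rule cdf_unique)
  show "real_distribution (distr Pm borel Zt)"
    by (rule prob_space.real_distribution_distr[OF Pm_prob]) simp
  show "real_distribution (distr M borel Z)" by (rule FZ_real)
  show "cdf (distr Pm borel Zt) = cdf (distr M borel Z)"
  proof
    fix z
    have "cdf (distr Pm borel Zt) z = measure Pm {u\<in>space Pm. Zt u \<le> z}"
      by (simp add: cdf_def measure_distr vimage_def Int_def conj_commute)
    then show "cdf (distr Pm borel Zt) z = cdf (distr M borel Z) z"
      using cdfZt FZ_def by simp
  qed
qed

lemma decZ: "\<omega> \<in> space M \<Longrightarrow> dec (Z \<omega>) = (Y \<omega>, D \<omega>)"
  using D01 arct[of "Y \<omega>"] by (auto simp: dec_def dec1_def dec2_def Z_def tan_arctan)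

lemma cdfY0: "measure Pm {u\<in>space Pm. Y0f u \<le> y} = F0 y"
proof -
  have b: "0 \<le> G0 y" "G0 y \<le> p0" "p0 \<le> K0 y" "K0 y \<le> 1"
    using G0_ge G0_le K0_ge[of y] G1_ge[of y] K0_le by auto
  have "measure Pm {u\<in>space Pm. Y0f u \<le> y} = measure Pm ({0<..<G0 y} \<union> {p0<..<K0 y})"
  proof (rule Pm_measure_AE)
    show "AE u in Pm. (u \<in> {u\<in>space Pm. Y0f u \<le> y}) = (u \<in> {0<..<G0 y} \<union> {p0<..<K0 y})"
      using AE_space AE_Pm_neq[of "G0 y"] AE_Pm_neq[of "K0 y"] AE_Pm_neq[of p0]
    proof eventually_elim
      case (elim u)
      then show ?case using Y0f_le[of u y] b by (auto simp: space_Pm)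
    qed
    show "{u\<in>space Pm. Y0f u \<le> y} \<in> sets Pm" by measurable
    show "{0<..<G0 y} \<union> {p0<..<K0 y} \<in> sets Pm" using b by (auto simp: sets_Pm)
  qed
  also have "\<dots> = G0 y + (K0 y - p0)" using b by (intro Pm_two) auto
  finally show ?thesis by (simp add: K0_def)
qed

lemma cdfY1: "measure Pm {u\<in>space Pm. Y1f u \<le> y} = F1 y"
proof -
  have b: "0 \<le> K1 y" "K1 y \<le> p0" "p0 \<le> p0 + G1 y" "p0 + G1 y \<le> 1"
    using G0_ge[of y] K1_ge[of y] K1_le G1_ge[of y] G1_le[of y] p01 by auto
  have "measure Pm {u\<in>space Pm. Y1f u \<le> y} = measure Pm ({0<..<K1 y} \<union> {p0<..<p0 + G1 y})"
  proof (rule Pm_measure_AE)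
    show "AE u in Pm. (u \<in> {u\<in>space Pm. Y1f u \<le> y}) = (u \<in> {0<..<K1 y} \<union> {p0<..<p0 + G1 y})"
      using AE_space AE_Pm_neq[of "K1 y"] AE_Pm_neq[of "p0 + G1 y"] AE_Pm_neq[of p0]
    proof eventually_elim
      case (elim u)
      then show ?case using Y1f_le[of u y] b by (auto simp: space_Pm)
    qed
    show "{u\<in>space Pm. Y1f u \<le> y} \<in> sets Pm" by measurable
    show "{0<..<K1 y} \<union> {p0<..<p0 + G1 y} \<in> sets Pm" using b by (auto simp: sets_Pm)
  qed
  also have "\<dots> = K1 y + (p0 + G1 y - p0)" using b by (intro Pm_two) auto
  finally show ?thesis by (simp add: K1_def)
qed

definition "fmap u = (Ytf u, Dtf u, Y0f u, Y1f u)"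

abbreviation "S4 \<equiv> (borel \<Otimes>\<^sub>M (borel \<Otimes>\<^sub>M (borel \<Otimes>\<^sub>M borel))) :: (real \<times> real \<times> real \<times> real) measure"

lemma fmap_meas[measurable]: "fmap \<in> Pm \<rightarrow>\<^sub>M S4"
  unfolding fmap_def by measurable

lemma part2:
  "\<exists>(N :: (real \<times> real \<times> real \<times> real) measure) Yt Dt Y0 Y1.
           prob_space N \<and>
           Yt \<in> borel_measurable N \<and> Dt \<in> borel_measurable N \<and>
           Y0 \<in> borel_measurable N \<and> Y1 \<in> borel_measurable N \<and>
           distr N (borel \<Otimes>\<^sub>M borel) (\<lambda>\<omega>. (Yt \<omega>, Dt \<omega>))
             = distr M (borel \<Otimes>\<^sub>M borel) (\<lambda>\<omega>. (Y \<omega>, D \<omega>)) \<and>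
           (\<forall>y. measure N {\<omega> \<in> space N. Y0 \<omega> \<le> y} = F0 y) \<and>
           (\<forall>y. measure N {\<omega> \<in> space N. Y1 \<omega> \<le> y} = F1 y) \<and>
           (\<forall>\<omega>\<in>space N. Yt \<omega> = Y1 \<omega> * Dt \<omega> + Y0 \<omega> * (1 - Dt \<omega>)) \<and>
           (AE \<omega> in N. (Y1 \<omega> > Y0 \<omega> \<longrightarrow> Dt \<omega> = 1) \<and> (Y1 \<omega> < Y0 \<omega> \<longrightarrow> Dt \<omega> = 0))"
proof -
  define N where "N = distr Pm S4 fmap"
  define Dt :: "real \<times> real \<times> real \<times> real \<Rightarrow> real" where "Dt \<omega> = fst (snd \<omega>)" for \<omega>
  define Y0 :: "real \<times> real \<times> real \<times> real \<Rightarrow> real" where "Y0 \<omega> = fst (snd (snd \<omega>))" for \<omega>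
  define Y1 :: "real \<times> real \<times> real \<times> real \<Rightarrow> real" where "Y1 \<omega> = snd (snd (snd \<omega>))" for \<omega>
  define Yt where "Yt \<omega> = Y1 \<omega> * Dt \<omega> + Y0 \<omega> * (1 - Dt \<omega>)" for \<omega>
  have mS[measurable]: "Dt \<in> borel_measurable S4" "Y0 \<in> borel_measurable S4" "Y1 \<in> borel_measurable S4"
    unfolding Dt_def Y0_def Y1_def by measurable
  have mYt[measurable]: "Yt \<in> borel_measurable S4" unfolding Yt_def by measurable
  have PN: "prob_space N" unfolding N_def by (rule prob_space.prob_space_distr[OF Pm_prob fmap_meas])
  have mN: "Yt \<in> borel_measurable N" "Dt \<in> borel_measurable N" "Y0 \<in> borel_measurable N" "Y1 \<in> borel_measurable N"
    unfolding N_def by simp_all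
  have g: "(\<lambda>\<omega>. (Yt \<omega>, Dt \<omega>)) \<in> S4 \<rightarrow>\<^sub>M borel \<Otimes>\<^sub>M borel" by measurable
  have law: "distr N (borel \<Otimes>\<^sub>M borel) (\<lambda>\<omega>. (Yt \<omega>, Dt \<omega>)) = distr M (borel \<Otimes>\<^sub>M borel) (\<lambda>\<omega>. (Y \<omega>, D \<omega>))"
  proof -
    have "distr N (borel \<Otimes>\<^sub>M borel) (\<lambda>\<omega>. (Yt \<omega>, Dt \<omega>)) = distr Pm (borel \<Otimes>\<^sub>M borel) ((\<lambda>\<omega>. (Yt \<omega>, Dt \<omega>)) \<circ> fmap)"
      unfolding N_def by (rule distr_distr[OF g fmap_meas])
    also have "\<dots> = distr Pm (borel \<Otimes>\<^sub>M borel) (dec \<circ> Zt)"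
      by (rule distr_cong) (auto simp: fmap_def Yt_def Dt_def Y0_def Y1_def dec_def Ytf_def[symmetric] Dtf_def[symmetric] ident)
    also have "\<dots> = distr (distr Pm borel Zt) (borel \<Otimes>\<^sub>M borel) dec"
      by (rule distr_distr[symmetric]) simp_all
    also have "\<dots> = distr (distr M borel Z) (borel \<Otimes>\<^sub>M borel) dec" by (simp add: law_Zt)
    also have "\<dots> = distr M (borel \<Otimes>\<^sub>M borel) (dec \<circ> Z)"
      by (rule distr_distr) (simp_all add: Zm)
    also have "\<dots> = distr M (borel \<Otimes>\<^sub>M borel) (\<lambda>\<omega>. (Y \<omega>, D \<omega>))"
      by (rule distr_cong) (auto simp: decZ)
    finally show ?thesis .
  qed
  have c0: "measure N {\<omega> \<in> space N. Y0 \<omega> \<le> y} = F0 y" for y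
  proof -
    have "measure N {\<omega> \<in> space N. Y0 \<omega> \<le> y} = measure Pm (fmap -` {\<omega> \<in> space S4. Y0 \<omega> \<le> y} \<inter> space Pm)"
      unfolding N_def by (subst measure_distr) (simp_all)
    also have "fmap -` {\<omega> \<in> space S4. Y0 \<omega> \<le> y} \<inter> space Pm = {u\<in>space Pm. Y0f u \<le> y}"
      by (auto simp: fmap_def Y0_def space_pair_measure)
    finally show ?thesis using cdfY0 by simp
  qed
  have c1: "measure N {\<omega> \<in> space N. Y1 \<omega> \<le> y} = F1 y" for y
  proof -
    have "measure N {\<omega> \<in> space N. Y1 \<omega> \<le> y} = measure Pm (fmap -` {\<omega> \<in> space S4. Y1 \<omega> \<le> y} \<inter> space Pm)"
      unfolding N_def by (subst measure_distr) (simp_all)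
    also have "fmap -` {\<omega> \<in> space S4. Y1 \<omega> \<le> y} \<inter> space Pm = {u\<in>space Pm. Y1f u \<le> y}"
      by (auto simp: fmap_def Y1_def space_pair_measure)
    finally show ?thesis using cdfY1 by simp
  qed
  have ae: "AE \<omega> in N. (Y1 \<omega> > Y0 \<omega> \<longrightarrow> Dt \<omega> = 1) \<and> (Y1 \<omega> < Y0 \<omega> \<longrightarrow> Dt \<omega> = 0)"
    unfolding N_def
  proof (subst AE_distr_iff[OF fmap_meas])
    show "{x \<in> space S4. (Y0 x < Y1 x \<longrightarrow> Dt x = 1) \<and> (Y1 x < Y0 x \<longrightarrow> Dt x = 0)} \<in> sets S4"
      by measurable
    show "AE x in Pm. (Y0 (fmap x) < Y1 (fmap x) \<longrightarrow> Dt (fmap x) = 1) \<and> (Y1 (fmap x) < Y0 (fmap x) \<longrightarrow> Dt (fmap x) = 0)"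
      using roy by (auto simp: fmap_def Y0_def Y1_def Dt_def)
  qed
  show ?thesis
    by (rule exI[of _ N], rule exI[of _ Yt], rule exI[of _ Dt], rule exI[of _ Y0], rule exI[of _ Y1])
      (use PN mN law c0 c1 ae in \<open>simp add: Yt_def\<close>)
qed

end

theorem theorem4:
  shows
   "(\<forall>(M :: 'a measure) Y0 Y1 Y D.
        prob_space M \<and>
        Y0 \<in> borel_measurable M \<and> Y1 \<in> borel_measurable M \<and>
        Y \<in> borel_measurable M \<and> D \<in> borel_measurable M \<and>
        (\<forall>\<omega>\<in>space M. D \<omega> \<in> {0, 1}) \<and>
        (\<forall>\<omega>\<in>space M. Y \<omega> = Y1 \<omega> * D \<omega> + Y0 \<omega> * (1 - D \<omega>)) \<and>
        (AE \<omega> in M. (Y1 \<omega> > Y0 \<omega> \<longrightarrow> D \<omega> = 1) \<and> (Y1 \<omega> < Y0 \<omega> \<longrightarrow> D \<omega> = 0))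
      \<longrightarrow> star_ineq M Y D (cdf (distr M borel Y0)) (cdf (distr M borel Y1)))
    \<and>
    (\<forall>(M :: 'a measure) Y D (F0 :: real \<Rightarrow> real) (F1 :: real \<Rightarrow> real).
        prob_space M \<and>
        Y \<in> borel_measurable M \<and> D \<in> borel_measurable M \<and>
        (\<forall>\<omega>\<in>space M. D \<omega> \<in> {0, 1}) \<and>
        (\<forall>x. continuous (at_right x) F0) \<and> (\<forall>x. continuous (at_right x) F1) \<and>
        (\<forall>x. 0 \<le> F0 x \<and> F0 x \<le> 1) \<and> (\<forall>x. 0 \<le> F1 x \<and> F1 x \<le> 1) \<and>
        star_ineq M Y D F0 F1
      \<longrightarrow>
        (\<exists>(N :: (real \<times> real \<times> real \<times> real) measure) Yt Dt Y0 Y1.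
           prob_space N \<and>
           Yt \<in> borel_measurable N \<and> Dt \<in> borel_measurable N \<and>
           Y0 \<in> borel_measurable N \<and> Y1 \<in> borel_measurable N \<and>
           distr N (borel \<Otimes>\<^sub>M borel) (\<lambda>\<omega>. (Yt \<omega>, Dt \<omega>))
             = distr M (borel \<Otimes>\<^sub>M borel) (\<lambda>\<omega>. (Y \<omega>, D \<omega>)) \<and>
           (\<forall>y. measure N {\<omega> \<in> space N. Y0 \<omega> \<le> y} = F0 y) \<and>
           (\<forall>y. measure N {\<omega> \<in> space N. Y1 \<omega> \<le> y} = F1 y) \<and>
           (\<forall>\<omega>\<in>space N. Yt \<omega> = Y1 \<omega> * Dt \<omega> + Y0 \<omega> * (1 - Dt \<omega>)) \<and>
           (AE \<omega> in N. (Y1 \<omega> > Y0 \<omega> \<longrightarrow> Dt \<omega> = 1) \<and> (Y1 \<omega> < Y0 \<omega> \<longrightarrow> Dt \<omega> = 0))))"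
  proof (rule conjI)
  show "\<forall>(M :: 'a measure) Y0 Y1 Y D.
        prob_space M \<and>
        Y0 \<in> borel_measurable M \<and> Y1 \<in> borel_measurable M \<and>
        Y \<in> borel_measurable M \<and> D \<in> borel_measurable M \<and>
        (\<forall>\<omega>\<in>space M. D \<omega> \<in> {0, 1}) \<and>
        (\<forall>\<omega>\<in>space M. Y \<omega> = Y1 \<omega> * D \<omega> + Y0 \<omega> * (1 - D \<omega>)) \<and>
        (AE \<omega> in M. (Y1 \<omega> > Y0 \<omega> \<longrightarrow> D \<omega> = 1) \<and> (Y1 \<omega> < Y0 \<omega> \<longrightarrow> D \<omega> = 0))
      \<longrightarrow> star_ineq M Y D (cdf (distr M borel Y0)) (cdf (distr M borel Y1))"
    using part1 by blast
next
  show "\<forall>(M :: 'a measure) Y D (F0 :: real \<Rightarrow> real) (F1 :: real \<Rightarrow> real).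
        prob_space M \<and>
        Y \<in> borel_measurable M \<and> D \<in> borel_measurable M \<and>
        (\<forall>\<omega>\<in>space M. D \<omega> \<in> {0, 1}) \<and>
        (\<forall>x. continuous (at_right x) F0) \<and> (\<forall>x. continuous (at_right x) F1) \<and>
        (\<forall>x. 0 \<le> F0 x \<and> F0 x \<le> 1) \<and> (\<forall>x. 0 \<le> F1 x \<and> F1 x \<le> 1) \<and>
        star_ineq M Y D F0 F1
      \<longrightarrow>
        (\<exists>(N :: (real \<times> real \<times> real \<times> real) measure) Yt Dt Y0 Y1.
           prob_space N \<and>
           Yt \<in> borel_measurable N \<and> Dt \<in> borel_measurable N \<and>
           Y0 \<in> borel_measurable N \<and> Y1 \<in> borel_measurable N \<and>
           distr N (borel \<Otimes>\<^sub>M borel) (\<lambda>\<omega>. (Yt \<omega>, Dt \<omega>))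
             = distr M (borel \<Otimes>\<^sub>M borel) (\<lambda>\<omega>. (Y \<omega>, D \<omega>)) \<and>
           (\<forall>y. measure N {\<omega> \<in> space N. Y0 \<omega> \<le> y} = F0 y) \<and>
           (\<forall>y. measure N {\<omega> \<in> space N. Y1 \<omega> \<le> y} = F1 y) \<and>
           (\<forall>\<omega>\<in>space N. Yt \<omega> = Y1 \<omega> * Dt \<omega> + Y0 \<omega> * (1 - Dt \<omega>)) \<and>
           (AE \<omega> in N. (Y1 \<omega> > Y0 \<omega> \<longrightarrow> Dt \<omega> = 1) \<and> (Y1 \<omega> < Y0 \<omega> \<longrightarrow> Dt \<omega> = 0)))"
  proof (intro allI impI)
    fix M :: "'a measure" and Y D :: "'a \<Rightarrow> real" and F0 F1 :: "real \<Rightarrow> real"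
    assume "prob_space M \<and>
        Y \<in> borel_measurable M \<and> D \<in> borel_measurable M \<and>
        (\<forall>\<omega>\<in>space M. D \<omega> \<in> {0, 1}) \<and>
        (\<forall>x. continuous (at_right x) F0) \<and> (\<forall>x. continuous (at_right x) F1) \<and>
        (\<forall>x. 0 \<le> F0 x \<and> F0 x \<le> 1) \<and> (\<forall>x. 0 \<le> F1 x \<and> F1 x \<le> 1) \<and>
        star_ineq M Y D F0 F1"
    then have "p2 M Y D F0 F1" by (intro p2.intro) auto
    then show "\<exists>(N :: (real \<times> real \<times> real \<times> real) measure) Yt Dt Y0 Y1.
           prob_space N \<and>
           Yt \<in> borel_measurable N \<and> Dt \<in> borel_measurable N \<and>
           Y0 \<in> borel_measurable N \<and> Y1 \<in> borel_measurable N \<and>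
           distr N (borel \<Otimes>\<^sub>M borel) (\<lambda>\<omega>. (Yt \<omega>, Dt \<omega>))
             = distr M (borel \<Otimes>\<^sub>M borel) (\<lambda>\<omega>. (Y \<omega>, D \<omega>)) \<and>
           (\<forall>y. measure N {\<omega> \<in> space N. Y0 \<omega> \<le> y} = F0 y) \<and>
           (\<forall>y. measure N {\<omega> \<in> space N. Y1 \<omega> \<le> y} = F1 y) \<and>
           (\<forall>\<omega>\<in>space N. Yt \<omega> = Y1 \<omega> * Dt \<omega> + Y0 \<omega> * (1 - Dt \<omega>)) \<and>
           (AE \<omega> in N. (Y1 \<omega> > Y0 \<omega> \<longrightarrow> Dt \<omega> = 1) \<and> (Y1 \<omega> < Y0 \<omega> \<longrightarrow> Dt \<omega> = 0))"
      by (rule p2.part2)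
  qed
qed

end
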